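(* A convex polyomino is (horizontally) centered if and only if for any pair of its cells there is a path in the polyomino connecting them of the form $S^{h_1}E^{k}S^{h_2}$ or $S^{h_1}W^{k}S^{h_2}$ with integers $h_1,h_2,k\geq 0$ (i.e. $h_1$ south steps, then $k$ east steps or $k$ west steps, then $h_2$ south steps).
   Context: A cell is a unit square of $\mathbb Z\times\mathbb Z$; a polyomino is a finite connected union of cells with no cut point, up to translation. A polyomino is convex if its intersection with every vertical and every horizontal line of cells is connected. The minimal bounding rectangle of a convex polyomino is the smallest lattice rectangle containing it. A convex polyomino is (horizontally) centered if it contains at least one row that touches both the left side and the right side of its minimal bounding rectangle. A path in a polyomino is a self-avoiding sequence of unit steps between adjacent cells of the polyomino, steps being $N=(0,1)$, $S=(0,-1)$, $E=(1,0)$, $W=(-1,0)$; exponents denote repetition of a step. *)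

theory Defs
  imports Main
begin

text \<open>Cells are identified with their lower-left corner (x, y) in Z x Z.
  A polyomino is a finite nonempty set of cells, connected via edge-adjacency
  (this is the "no cut point" condition: cells sharing only a corner do not connect).\<close>

type_synonym cell = "int \<times> int"

definition adjacent :: "cell \<Rightarrow> cell \<Rightarrow> bool" where
  "adjacent a b \<longleftrightarrow> \<bar>fst a - fst b\<bar> + \<bar>snd a - snd b\<bar> = 1"

definition polyomino :: "cell set \<Rightarrow> bool" where
  "polyomino P \<longleftrightarrow> finite P \<and> P \<noteq> {} \<and>
     (\<forall>a\<in>P. \<forall>b\<in>P. (a, b) \<in> {(c, d). c \<in> P \<and> d \<in> P \<and> adjacent c d}\<^sup>*)"

definition convex_polyomino :: "cell set \<Rightarrow> bool" where
  "convex_polyomino P \<longleftrightarrow> polyomino P \<and>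
     (\<forall>y x1 x2 x. (x1, y) \<in> P \<and> (x2, y) \<in> P \<and> x1 \<le> x \<and> x \<le> x2 \<longrightarrow> (x, y) \<in> P) \<and>
     (\<forall>x y1 y2 y. (x, y1) \<in> P \<and> (x, y2) \<in> P \<and> y1 \<le> y \<and> y \<le> y2 \<longrightarrow> (x, y) \<in> P)"

definition centered :: "cell set \<Rightarrow> bool" where
  "centered P \<longleftrightarrow> (\<exists>y. (Min (fst ` P), y) \<in> P \<and> (Max (fst ` P), y) \<in> P)"

datatype step = N | S | E | W

fun move :: "step \<Rightarrow> cell \<Rightarrow> cell" where
  "move N (x, y) = (x, y + 1)"
| "move S (x, y) = (x, y - 1)"
| "move E (x, y) = (x + 1, y)"
| "move W (x, y) = (x - 1, y)"

fun visited :: "cell \<Rightarrow> step list \<Rightarrow> cell list" where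
  "visited a [] = [a]"
| "visited a (s # ws) = a # visited (move s a) ws"

definition is_path :: "cell set \<Rightarrow> cell \<Rightarrow> cell \<Rightarrow> step list \<Rightarrow> bool" where
  "is_path P a b ws \<longleftrightarrow> set (visited a ws) \<subseteq> P \<and> distinct (visited a ws) \<and>
     last (visited a ws) = b"

definition SES_word :: "nat \<Rightarrow> step \<Rightarrow> nat \<Rightarrow> nat \<Rightarrow> step list" where
  "SES_word h1 d k h2 = replicate h1 S @ replicate k d @ replicate h2 S"

end

theory Submission
  imports Defs
begin

fun dx :: "step \<Rightarrow> int" where
  "dx N = 0" | "dx S = 0" | "dx E = 1" | "dx W = -1"
fun dy :: "step \<Rightarrow> int" where
  "dy N = 1" | "dy S = -1" | "dy E = 0" | "dy W = 0"

lemma move_eq: "move s c = (fst c + dx s, snd c + dy s)"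
  by (cases s; cases c) auto

lemma visited_ne: "visited a ws \<noteq> []"
  by (cases ws) auto

lemma hd_visited: "hd (visited a ws) = a"
  by (cases ws) auto

lemma visited_append:
  "visited a (xs @ ys) = butlast (visited a xs) @ visited (last (visited a xs)) ys"
  by (induction xs arbitrary: a) (auto simp: visited_ne)

lemma set_visited_append:
  "set (visited a (xs @ ys)) = set (visited a xs) \<union> set (visited (last (visited a xs)) ys)"
proof -
  have 1: "set (visited a xs) = set (butlast (visited a xs)) \<union> {last (visited a xs)}"
    by (metis append_butlast_last_id visited_ne set_append empty_set list.simps(15) Un_empty_right Un_insert_right)
  have 2: "last (visited a xs) \<in> set (visited (last (visited a xs)) ys)"
    by (metis hd_visited hd_in_set visited_ne)
  show ?thesis unfolding visited_append using 1 2 by auto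
qed

lemma last_visited_append:
  "last (visited a (xs @ ys)) = last (visited (last (visited a xs)) ys)"
  by (simp add: visited_append visited_ne)

lemma rep_set:
  "c \<in> set (visited a (replicate n s)) \<longleftrightarrow>
     (\<exists>i\<le>n. c = (fst a + int i * dx s, snd a + int i * dy s))"
proof (induction n arbitrary: a)
  case 0
  then show ?case by (cases a) auto
next
  case (Suc n)
  have "c \<in> set (visited a (replicate (Suc n) s)) \<longleftrightarrow>
     c = a \<or> (\<exists>i\<le>n. c = (fst a + dx s + int i * dx s, snd a + dy s + int i * dy s))"
    by (simp add: Suc move_eq)
  also have "\<dots> \<longleftrightarrow> (\<exists>i\<le>Suc n. c = (fst a + int i * dx s, snd a + int i * dy s))"
  proof
    assume "c = a \<or> (\<exists>i\<le>n. c = (fst a + dx s + int i * dx s, snd a + dy s + int i * dy s))"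
    then show "\<exists>i\<le>Suc n. c = (fst a + int i * dx s, snd a + int i * dy s)"
    proof
      assume "c = a" then show ?thesis by (intro exI[of _ 0]) auto
    next
      assume "\<exists>i\<le>n. c = (fst a + dx s + int i * dx s, snd a + dy s + int i * dy s)"
      then obtain i where "i \<le> n" "c = (fst a + dx s + int i * dx s, snd a + dy s + int i * dy s)" by blast
      then show ?thesis by (intro exI[of _ "Suc i"]) (auto simp: algebra_simps)
    qed
  next
    assume "\<exists>i\<le>Suc n. c = (fst a + int i * dx s, snd a + int i * dy s)"
    then obtain i where i: "i \<le> Suc n" "c = (fst a + int i * dx s, snd a + int i * dy s)" by blast
    show "c = a \<or> (\<exists>i\<le>n. c = (fst a + dx s + int i * dx s, snd a + dy s + int i * dy s))"
    proof (cases i)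
      case 0 then show ?thesis using i by (cases a) auto
    next
      case (Suc j) then show ?thesis using i by (intro disjI2 exI[of _ j]) (auto simp: algebra_simps)
    qed
  qed
  finally show ?case .
qed

lemma rep_last:
  "last (visited a (replicate n s)) = (fst a + int n * dx s, snd a + int n * dy s)"
  by (induction n arbitrary: a) (auto simp: move_eq visited_ne algebra_simps)

lemma distinct_SE:
  "set ws \<subseteq> {S, E} \<Longrightarrow> distinct (visited b ws) \<and>
     (\<forall>c\<in>set (visited b ws). snd c \<le> snd b \<and> fst b \<le> fst c)"
proof (induction ws arbitrary: b)
  case Nil
  then show ?case by auto
next
  case (Cons s ws)
  then have s: "s = S \<or> s = E" and IH: "distinct (visited (move s b) ws) \<and>
     (\<forall>c\<in>set (visited (move s b) ws). snd c \<le> snd (move s b) \<and> fst (move s b) \<le> fst c)"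
    by auto
  then show ?case by (auto simp: move_eq)
qed

lemma distinct_SW:
  "set ws \<subseteq> {S, W} \<Longrightarrow> distinct (visited b ws) \<and>
     (\<forall>c\<in>set (visited b ws). snd c \<le> snd b \<and> fst c \<le> fst b)"
proof (induction ws arbitrary: b)
  case Nil
  then show ?case by auto
next
  case (Cons s ws)
  then have s: "s = S \<or> s = W" and IH: "distinct (visited (move s b) ws) \<and>
     (\<forall>c\<in>set (visited (move s b) ws). snd c \<le> snd (move s b) \<and> fst c \<le> fst (move s b))"
    by auto
  then show ?case by (auto simp: move_eq)
qed

lemma SES_split:
  "SES_word h1 d k h2 = replicate h1 S @ (replicate k d @ replicate h2 S)"
  by (simp add: SES_word_def)


lemma mk_path:
  assumes conv: "convex_polyomino P" and ab: "a \<in> P" "b \<in> P"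
    and m: "snd b \<le> m" "m \<le> snd a" and am: "(fst a, m) \<in> P" and bm: "(fst b, m) \<in> P"
  shows "\<exists>h1 k h2 d. d \<in> {E, W} \<and> is_path P a b (SES_word h1 d k h2)"
proof -
  obtain xa ya where a: "a = (xa, ya)" by fastforce
  obtain xb yb where b: "b = (xb, yb)" by fastforce
  have row: "\<And>y x1 x2 x. (x1, y) \<in> P \<Longrightarrow> (x2, y) \<in> P \<Longrightarrow> x1 \<le> x \<Longrightarrow> x \<le> x2 \<Longrightarrow> (x, y) \<in> P"
    using conv unfolding convex_polyomino_def by blast
  have col: "\<And>x y1 y2 y. (x, y1) \<in> P \<Longrightarrow> (x, y2) \<in> P \<Longrightarrow> y1 \<le> y \<Longrightarrow> y \<le> y2 \<Longrightarrow> (x, y) \<in> P"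
    using conv unfolding convex_polyomino_def by blast
  define h1 where "h1 = nat (ya - m)"
  define h2 where "h2 = nat (m - yb)"
  define k where "k = nat \<bar>xb - xa\<bar>"
  define d where "d = (if xa \<le> xb then E else W)"
  have d: "d \<in> {E, W}" by (simp add: d_def)
  have dk: "int k * dx d = xb - xa" by (auto simp: d_def k_def)
  have dyd: "dy d = 0" by (auto simp: d_def)
  let ?w1 = "replicate h1 S" and ?w2 = "replicate k d" and ?w3 = "replicate h2 S"
  have l1: "last (visited a ?w1) = (xa, m)" using m by (simp add: rep_last a b h1_def)
  have l2: "last (visited (xa, m) ?w2) = (xb, m)" using dk dyd by (simp add: rep_last)
  have l3: "last (visited (xb, m) ?w3) = (xb, yb)" using m by (simp add: rep_last a b h2_def)
  have s1: "set (visited a ?w1) \<subseteq> P"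
  proof
    fix c assume "c \<in> set (visited a ?w1)"
    then obtain i where "i \<le> h1" "c = (xa, ya - int i)" by (auto simp: rep_set a)
    then show "c \<in> P" using col[of xa m ya "ya - int i"] am ab m a b h1_def by auto
  qed
  have s2: "set (visited (xa, m) ?w2) \<subseteq> P"
  proof
    fix c assume "c \<in> set (visited (xa, m) ?w2)"
    then obtain i where i: "i \<le> k" "c = (xa + int i * dx d, m)" using dyd by (auto simp: rep_set)
    show "c \<in> P"
    proof (cases "xa \<le> xb")
      case True
      then show ?thesis using i row[of xa m xb "xa + int i"] am bm a b k_def d_def by auto
    next
      case False
      then show ?thesis using i row[of xb m xa "xa - int i"] am bm a b k_def d_def by auto
    qed
  qed
  have s3: "set (visited (xb, m) ?w3) \<subseteq> P"
  proof
    fix c assume "c \<in> set (visited (xb, m) ?w3)"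
    then obtain i where "i \<le> h2" "c = (xb, m - int i)" by (auto simp: rep_set)
    then show "c \<in> P" using col[of xb yb m "m - int i"] bm ab m a b h2_def by auto
  qed
  have dist: "distinct (visited a (SES_word h1 d k h2))"
  proof (cases "d = E")
    case True
    have "set (SES_word h1 d k h2) \<subseteq> {S, E}" using True by (auto simp: SES_word_def)
    then show ?thesis using distinct_SE[of "SES_word h1 d k h2" a] by blast
  next
    case False
    then have "d = W" using d by auto
    have "set (SES_word h1 d k h2) \<subseteq> {S, W}" using \<open>d = W\<close> by (auto simp: SES_word_def)
    then show ?thesis using distinct_SW[of "SES_word h1 d k h2" a] by blast
  qed
  have "is_path P a b (SES_word h1 d k h2)"
    unfolding is_path_def SES_split
    using s1 s2 s3 l1 l2 l3 dist b
    by (simp add: set_visited_append last_visited_append SES_split)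
  then show ?thesis using d by blast
qed

lemma seg:
  assumes "is_path P a b (SES_word h1 d k h2)" and d: "d \<in> {E, W}"
  shows "(fst a, snd a - int h1) \<in> P \<and> (fst b, snd a - int h1) \<in> P"
proof -
  let ?w1 = "replicate h1 S" and ?w2 = "replicate k d" and ?w3 = "replicate h2 S"
  define c1 where "c1 = last (visited a ?w1)"
  define c2 where "c2 = last (visited c1 ?w2)"
  have c1: "c1 = (fst a, snd a - int h1)" by (simp add: c1_def rep_last)
  have sub: "set (visited a ?w1) \<subseteq> P" "set (visited c1 ?w2) \<subseteq> P"
    using assms unfolding is_path_def SES_split c1_def by (auto simp: set_visited_append)
  have "c1 \<in> set (visited a ?w1)" unfolding c1_def by (simp add: visited_ne)
  moreover have "c2 \<in> set (visited c1 ?w2)" unfolding c2_def by (simp add: visited_ne)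
  moreover have "b = last (visited c2 ?w3)"
    using assms unfolding is_path_def SES_split c2_def c1_def by (simp add: last_visited_append)
  then have "b = (fst c2, snd c2 - int h2)" by (simp add: rep_last)
  moreover have "snd c2 = snd c1 + int k * dy d" by (simp add: c2_def rep_last)
  moreover have "dy d = 0" using d by auto
  ultimately show ?thesis using sub c1
    by (metis (no_types, lifting) add_0_right fst_conv mult_zero_right snd_conv subset_iff prod.collapse)
qed

theorem mainTheorem2:
  assumes "convex_polyomino P"
  shows "centered P \<longleftrightarrow>
    (\<forall>a\<in>P. \<forall>b\<in>P. \<exists>h1 k h2 d. d \<in> {E, W} \<and>
        (is_path P a b (SES_word h1 d k h2) \<or> is_path P b a (SES_word h1 d k h2)))"
proof -
  have fin: "finite P" and ne: "P \<noteq> {}" using assms unfolding convex_polyomino_def polyomino_def by auto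
  have row: "\<And>y x1 x2 x. (x1, y) \<in> P \<Longrightarrow> (x2, y) \<in> P \<Longrightarrow> x1 \<le> x \<Longrightarrow> x \<le> x2 \<Longrightarrow> (x, y) \<in> P"
    using assms unfolding convex_polyomino_def by blast
  have col: "\<And>x y1 y2 y. (x, y1) \<in> P \<Longrightarrow> (x, y2) \<in> P \<Longrightarrow> y1 \<le> y \<Longrightarrow> y \<le> y2 \<Longrightarrow> (x, y) \<in> P"
    using assms unfolding convex_polyomino_def by blast
  let ?mn = "Min (fst ` P)" and ?mx = "Max (fst ` P)"
  have bnd: "\<And>c. c \<in> P \<Longrightarrow> ?mn \<le> fst c \<and> fst c \<le> ?mx" using fin by auto
  show ?thesis
  proof
    assume "centered P"
    then obtain y0 where y0: "(?mn, y0) \<in> P" "(?mx, y0) \<in> P" unfolding centered_def by blast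
    have full: "\<And>c. c \<in> P \<Longrightarrow> (fst c, y0) \<in> P" using bnd y0 row by blast
    have key: "\<exists>h1 k h2 d. d \<in> {E, W} \<and> is_path P a b (SES_word h1 d k h2)"
      if ab: "a \<in> P" "b \<in> P" "snd b \<le> snd a" for a b
    proof -
      define m where "m = max (snd b) (min (snd a) y0)"
      have fa: "(fst a, y0) \<in> P" "(fst b, y0) \<in> P" using full ab by auto
      have ea: "(fst a, snd a) \<in> P" "(fst b, snd b) \<in> P" using ab by auto
      have am: "(fst a, m) \<in> P"
      proof (cases "y0 \<le> snd b")
        case True then show ?thesis using col[of "fst a" y0 "snd a" m] fa ea ab by (auto simp: m_def)
      next
        case False then show ?thesis using fa ea ab by (auto simp: m_def min_def max_def)
      qed
      have bm: "(fst b, m) \<in> P"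
      proof (cases "snd a < y0")
        case True then show ?thesis using col[of "fst b" "snd b" y0 m] fa ea ab by (auto simp: m_def)
      next
        case False then show ?thesis using fa ea by (auto simp: m_def max_def min_def)
      qed
      show ?thesis by (rule mk_path[OF assms ab(1,2) _ _ am bm]) (use ab in \<open>auto simp: m_def\<close>)
    qed
    show "\<forall>a\<in>P. \<forall>b\<in>P. \<exists>h1 k h2 d. d \<in> {E, W} \<and>
        (is_path P a b (SES_word h1 d k h2) \<or> is_path P b a (SES_word h1 d k h2))"
    proof (intro ballI)
      fix a b assume "a \<in> P" "b \<in> P"
      then show "\<exists>h1 k h2 d. d \<in> {E, W} \<and>
        (is_path P a b (SES_word h1 d k h2) \<or> is_path P b a (SES_word h1 d k h2))"
        using key[of a b] key[of b a] by (cases "snd b \<le> snd a") force+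
    qed
  next
    assume H: "\<forall>a\<in>P. \<forall>b\<in>P. \<exists>h1 k h2 d. d \<in> {E, W} \<and>
        (is_path P a b (SES_word h1 d k h2) \<or> is_path P b a (SES_word h1 d k h2))"
    obtain L where L: "L \<in> P" "fst L = ?mn"
      proof -
      have "?mn \<in> fst ` P" using Min_in[of "fst ` P"] fin ne by blast
      then obtain c where "c \<in> P" "?mn = fst c" by blast
      then show ?thesis using that by simp
    qed
    obtain R where R: "R \<in> P" "fst R = ?mx"
      proof -
      have "?mx \<in> fst ` P" using Max_in[of "fst ` P"] fin ne by blast
      then obtain c where "c \<in> P" "?mx = fst c" by blast
      then show ?thesis using that by simp
    qed
    obtain h1 k h2 d where d: "d \<in> {E, W}" and
      p: "is_path P L R (SES_word h1 d k h2) \<or> is_path P R L (SES_word h1 d k h2)"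
      using H[rule_format, OF L(1) R(1)] by blast
    from p show "centered P"
    proof
      assume "is_path P L R (SES_word h1 d k h2)"
      from seg[OF this d] have "(fst L, snd L - int h1) \<in> P" "(fst R, snd L - int h1) \<in> P" by auto
      then show ?thesis unfolding centered_def L(2)[symmetric] R(2)[symmetric] by blast
    next
      assume "is_path P R L (SES_word h1 d k h2)"
      from seg[OF this d] have "(fst R, snd R - int h1) \<in> P" "(fst L, snd R - int h1) \<in> P" by auto
      then show ?thesis unfolding centered_def L(2)[symmetric] R(2)[symmetric] by blast
    qed
  qed
qed

end
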